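(* Let $K=2$ and let $n_1,n_2$ be nonnegative integers; put $s \coloneqq \min(n_1,n_2)$ and $l \coloneqq \max(n_1,n_2)$. If $l > s > 0$, then \[ h(s+1,\,l) \;\geq\; h(s,\,l+1). \]
   Context: Fix an integer $K\ge 2$. An initial assortment is a vector $\vec n=(n_1,\dots,n_K)$ of nonnegative integers ($n_i$ is the initial stock of goodie type $i$). The following random process is run: the stocks start at $\vec n^{(0)}=\vec n$; at each step $t=1,2,\dots$, as long as at least two coordinates of the current stock vector $\vec n^{(t-1)}$ are nonzero, an index $i$ is chosen uniformly at random (independently of the past) among the indices with $n_i^{(t-1)}>0$, and $\vec n^{(t)}=\vec n^{(t-1)}-\vec e_i$, where $\vec e_i$ is the $i$-th standard unit vector. The process stops at the first time $T$ at which at most one coordinate of $\vec n^{(T)}$ is nonzero. Define $h(\vec n)=\mathbb{E}[T]$ (the expected number of "happy" attendees). Equivalently, with $\operatorname{support}(\vec n)=\{i : n_i\neq 0\}$: $h(\vec n)=0$ if $|\operatorname{support}(\vec n)|\le 1$, and otherwise $h(\vec n)=1+\frac{1}{|\operatorname{support}(\vec n)|}\sum_{i\in\operatorname{support}(\vec n)} h(\vec n-\vec e_i)$. *)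

theory Defs
  imports Main "HOL.Real"
begin

text \<open>An assortment with K types is a list of naturals of length K (index i < K).\<close>

definition supp :: "nat list \<Rightarrow> nat set" where
  "supp ns = {i. i < length ns \<and> ns ! i \<noteq> 0}"

lemma finite_supp[simp]: "finite (supp ns)"
  unfolding supp_def by simp

lemma sum_list_dec:
  assumes "i \<in> supp ns"
  shows "sum_list (ns[i := ns ! i - 1]) < sum_list ns"
proof -
  from assms have i: "i < length ns" "ns ! i \<noteq> 0" by (auto simp: supp_def)
  have le: "ns ! i \<le> sum_list ns" using i(1) by (rule elem_le_sum_list)
  have "sum_list (ns[i := ns ! i - 1]) = sum_list ns - 1"
    using i le by (simp add: sum_list_update)
  with i le show ?thesis by simp
qed

function h :: "nat list \<Rightarrow> real" where
  "h ns = (if card (supp ns) \<le> 1 then 0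
           else 1 + (\<Sum>i\<in>supp ns. h (ns[i := ns ! i - 1])) / real (card (supp ns)))"
  by pat_completeness auto
termination
  by (relation "measure sum_list") (auto simp del: One_nat_def intro: sum_list_dec)

declare h.simps[simp del]

end

theory Submission
  imports Defs
begin

lemma lt2: "(x::nat) < Suc (Suc 0) \<longleftrightarrow> x = 0 \<or> x = Suc 0" by auto

lemma h2: "h [a,b] = (if a = 0 \<or> b = 0 then 0 else 1 + (h [a-1,b] + h [a,b-1]) / 2)"
proof -
  have s: "supp [a,b] = (if a=0 then {} else {0}) \<union> (if b = 0 then {} else {1})"
  proof (rule set_eqI)
    fix x
    show "x \<in> supp [a,b] \<longleftrightarrow> x \<in> (if a=0 then {} else {0}) \<union> (if b = 0 then {} else {1})"
      using lt2[of x] by (cases "x = 0"; cases "x = 1"; auto simp: supp_def)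
  qed
  show ?thesis
    by (subst h.simps) (auto simp: s)
qed

lemma hnn: "h [a,b] \<ge> 0"
proof (induction "a+b" arbitrary: a b rule: less_induct)
  case less
  show ?case
  proof (cases "a = 0 \<or> b = 0")
    case True then show ?thesis by (simp add: h2[of a b])
  next
    case False
    then have "h [a-1,b] \<ge> 0" "h [a,b-1] \<ge> 0" using less by auto
    then show ?thesis using False by (simp add: h2[of a b])
  qed
qed

lemma hsym: "h [a,b] = h [b,a]"
proof (induction "a+b" arbitrary: a b rule: less_induct)
  case less
  show ?case
  proof (cases "a = 0 \<or> b = 0")
    case True then show ?thesis by (auto simp: h2[of a b] h2[of b a])
  next
    case False
    then have "h [a-1,b] = h [b, a-1]" "h [a,b-1] = h [b-1,a]" using less by auto
    then show ?thesis using False by (simp add: h2[of a b] h2[of b a])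
  qed
qed

lemma main: "1 \<le> a \<Longrightarrow> a \<le> b \<Longrightarrow> h [a-1,b+1] \<le> h [a,b]"
proof (induction "a+b" arbitrary: a b rule: less_induct)
  case less
  show ?case
  proof (cases "a = 1")
    case True
    then show ?thesis using hnn[of a b] by (simp add: h2[of 0])
  next
    case False
    then have a2: "a \<ge> 2" using less by auto
    then have b2: "b \<ge> 2" using less by auto
    have e1: "h [a-1,b+1] = 1 + (h [a-2,b+1] + h [a-1,b]) / 2"
      using a2 h2[of "a-1" "b+1"] by (simp add: diff_diff_add numeral_2_eq_2)
    have e2: "h [a,b] = 1 + (h [a-1,b] + h [a,b-1]) / 2"
      using a2 b2 by (simp add: h2[of a b])
    have i1: "h [a-2,b+1] \<le> h [a-1,b]"
      using less(1)[of "a-1" b] a2 less by (simp add: numeral_2_eq_2)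
    have i2: "h [a-1,b] \<le> h [a,b-1]"
    proof (cases "a = b")
      case True
      then show ?thesis using hsym[of "a-1" b] by simp
    next
      case False
      then show ?thesis using less(1)[of a "b-1"] a2 b2 less by simp
    qed
    show ?thesis using e1 e2 i1 i2 by simp
  qed
qed

theorem lemma1:
  fixes n1 n2 :: nat
  defines "s \<equiv> min n1 n2" and "l \<equiv> max n1 n2"
  assumes "l > s" and "s > 0"
  shows "h [s + 1, l] \<ge> h [s, l + 1]"
  using main[of "s+1" l] assms by simp

end
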